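(* Let $\varphi_1(m,n)=(2m+n-1)/3$ and $\varphi_2(m,n)=(m+2n-2)/3$, and for a 4-tuple set $\varphi_i(a,b,c,d)=\varphi_i(a+b,c+d)$ and $\varphi_i(T)=\varphi_i(\lambda(T))$ for a tree $T$. Then: (i) If $\lambda(T)=(a,b,c,d)$ for a tree $T$, then $2m+n\equiv 1\pmod 3$, where $m=a+b$ and $n=c+d$. (ii) Every tree $T$ has exactly $\varphi_1(T)$ vertices of color $\alpha$, $\varphi_1(T)$ vertices of color $\beta$, $\varphi_2(T)$ vertices of color $\gamma$, and $\varphi_2(T)+1$ vertices of color $1$. (iii) In any nontrivial tree $T$, $\alpha^\#\le\varphi_1(T)$, $\beta^\#\le\varphi_1(T)$, $\gamma^\#\le\varphi_2(T)$ and $1^\#\le\varphi_2(T)$. (iv) A 4-tuple $(a,b,c,d)$ of nonnegative integers different from $(0,0,0,1)$ is representable iff $2a+2b+c+d\equiv1\pmod 3$, $a\le\varphi_1(a,b,c,d)$, $b\le\varphi_1(a,b,c,d)$, $c\le\varphi_2(a,b,c,d)$ and $d\le\varphi_2(a,b,c,d)$.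
   Context: A tree is a full binary tree: a finite rooted tree in which every non-leaf vertex has exactly two children, a left child and a right child; the trivial tree has one vertex. Let $\mathbf{KL}=\{1,\alpha,\beta,\gamma\}$ be the Klein 4-group ($\alpha^2=\beta^2=1$, $\alpha\beta=\gamma$). The vertices of a tree are colored by elements of $\mathbf{KL}$: the root has color $1$, a left child has $\alpha$ times the color of its parent, and a right child has $\beta$ times the color of its parent. For $g\in\mathbf{KL}$, $g^\#$ denotes the number of leaves of color $g$, and the total color of $T$ is $\lambda(T)=(\alpha^\#,\beta^\#,\gamma^\#,1^\#)$. A 4-tuple of natural numbers is representable if it equals $\lambda(T)$ for some tree $T$. *)

theory Defs
  imports Main "HOL-Library.Multiset" Complex_Main
begin

datatype tree = Leaf | Node tree tree

datatype kl = One | Alpha | Beta | Gamma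

fun klmul :: "kl \<Rightarrow> kl \<Rightarrow> kl" where
  "klmul One x = x"
| "klmul x One = x"
| "klmul Alpha Alpha = One"
| "klmul Beta Beta = One"
| "klmul Gamma Gamma = One"
| "klmul Alpha Beta = Gamma"
| "klmul Beta Alpha = Gamma"
| "klmul Alpha Gamma = Beta"
| "klmul Gamma Alpha = Beta"
| "klmul Beta Gamma = Alpha"
| "klmul Gamma Beta = Alpha"

fun leaf_colors :: "kl \<Rightarrow> tree \<Rightarrow> kl multiset" where
  "leaf_colors c Leaf = {#c#}"
| "leaf_colors c (Node l r) = leaf_colors (klmul Alpha c) l + leaf_colors (klmul Beta c) r"

fun vertex_colors :: "kl \<Rightarrow> tree \<Rightarrow> kl multiset" where
  "vertex_colors c Leaf = {#c#}"
| "vertex_colors c (Node l r) =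
     add_mset c (vertex_colors (klmul Alpha c) l + vertex_colors (klmul Beta c) r)"

definition nleaves :: "kl \<Rightarrow> tree \<Rightarrow> nat" where
  "nleaves g T = count (leaf_colors One T) g"

definition nvertices :: "kl \<Rightarrow> tree \<Rightarrow> nat" where
  "nvertices g T = count (vertex_colors One T) g"

definition total_color :: "tree \<Rightarrow> nat \<times> nat \<times> nat \<times> nat" where
  "total_color T = (nleaves Alpha T, nleaves Beta T, nleaves Gamma T, nleaves One T)"

definition representable :: "nat \<times> nat \<times> nat \<times> nat \<Rightarrow> bool" where
  "representable t \<longleftrightarrow> (\<exists>T. total_color T = t)"

definition phi1 :: "nat \<Rightarrow> nat \<Rightarrow> real" where
  "phi1 m n = (2 * real m + real n - 1) / 3"

definition phi2 :: "nat \<Rightarrow> nat \<Rightarrow> real" where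
  "phi2 m n = (real m + 2 * real n - 2) / 3"

definition phi1_4 :: "nat \<times> nat \<times> nat \<times> nat \<Rightarrow> real" where
  "phi1_4 t = (case t of (a, b, c, d) \<Rightarrow> phi1 (a + b) (c + d))"

definition phi2_4 :: "nat \<times> nat \<times> nat \<times> nat \<Rightarrow> real" where
  "phi2_4 t = (case t of (a, b, c, d) \<Rightarrow> phi2 (a + b) (c + d))"

definition phi1T :: "tree \<Rightarrow> real" where "phi1T T = phi1_4 (total_color T)"
definition phi2T :: "tree \<Rightarrow> real" where "phi2T T = phi2_4 (total_color T)"

end

theory Submission
  imports Defs
begin

fun internal_colors :: "kl \<Rightarrow> tree \<Rightarrow> kl multiset" where
  "internal_colors c Leaf = {#}"
| "internal_colors c (Node l r) =
     add_mset c (internal_colors (klmul Alpha c) l + internal_colors (klmul Beta c) r)"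

lemma vertex_split: "vertex_colors c T = leaf_colors c T + internal_colors c T"
  by (induction T arbitrary: c) auto

lemma klA_eq: "(klmul Alpha h = c) \<longleftrightarrow> (h = klmul Alpha c)"
  by (cases h; cases c) auto
lemma klB_eq: "(klmul Beta h = c) \<longleftrightarrow> (h = klmul Beta c)"
  by (cases h; cases c) auto

lemma vertex_eq:
  "count (vertex_colors c T) h = (if h = c then 1 else 0)
     + count (internal_colors c T) (klmul Alpha h) + count (internal_colors c T) (klmul Beta h)"
proof (induction T arbitrary: c)
  case Leaf
  then show ?case by simp
next
  case (Node l r)
  show ?case using Node.IH(1)[of "klmul Alpha c"] Node.IH(2)[of "klmul Beta c"]
    by (cases h; cases c; simp)
qed

lemma counts:
  fixes T
  defines "V \<equiv> \<lambda>g. real (nvertices g T)" and "L \<equiv> \<lambda>g. real (nleaves g T)"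
      and "I \<equiv> \<lambda>g. real (count (internal_colors One T) g)"
  shows "V One = 1 + I Alpha + I Beta" "V Alpha = I One + I Gamma"
    "V Beta = I Gamma + I One" "V Gamma = I Beta + I Alpha"
    "\<And>g. V g = L g + I g"
  using vertex_eq[where c=One and T=T and h=One] vertex_eq[where c=One and T=T and h=Alpha]
    vertex_eq[where c=One and T=T and h=Beta] vertex_eq[where c=One and T=T and h=Gamma]
  by (auto simp: V_def L_def I_def nvertices_def nleaves_def vertex_split)

lemma part2: "real (nvertices Alpha T) = phi1T T
          \<and> real (nvertices Beta T) = phi1T T
          \<and> real (nvertices Gamma T) = phi2T T
          \<and> real (nvertices One T) = phi2T T + 1"
  using counts[where T=T] counts(5)[where T=T and g=One] counts(5)[where T=T and g=Alpha] counts(5)[where T=T and g=Beta]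
    counts(5)[where T=T and g=Gamma]
  unfolding phi1T_def phi2T_def total_color_def phi1_4_def phi2_4_def phi1_def phi2_def
  by auto

lemma mod3_1: "(x::nat) = 3*q+1 \<Longrightarrow> x mod 3 = 1" by presburger

lemma part1: "total_color T = (a, b, c, d) \<Longrightarrow> (2 * (a + b) + (c + d)) mod 3 = 1"
proof -
  assume h: "total_color T = (a, b, c, d)"
  have "real (nvertices Alpha T) = (2 * real (a+b) + real (c+d) - 1) / 3"
    using part2[of T] h unfolding phi1T_def phi1_4_def phi1_def by simp
  hence "real (3 * nvertices Alpha T + 1) = real (2 * (a + b) + (c + d))" by simp
  hence "2 * (a + b) + (c + d) = 3 * nvertices Alpha T + 1" by (simp only: of_nat_eq_iff)
  thus ?thesis by (rule mod3_1)
qed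

lemma part3: "T \<noteq> Leaf \<Longrightarrow>
          real (nleaves Alpha T) \<le> phi1T T
          \<and> real (nleaves Beta T) \<le> phi1T T
          \<and> real (nleaves Gamma T) \<le> phi2T T
          \<and> real (nleaves One T) \<le> phi2T T"
proof -
  assume "T \<noteq> Leaf"
  then obtain l r where T: "T = Node l r" by (cases T) auto
  have "real (count (internal_colors One T) One) \<ge> 1" using T by simp
  thus ?thesis using part2[of T] counts(5)[where T=T and g=One] counts(5)[where T=T and g=Alpha] counts(5)[where T=T and g=Beta]
    counts(5)[where T=T and g=Gamma] by linarith
qed

lemma expand:
  "g \<in># leaf_colors c T \<Longrightarrow> \<exists>T'. leaf_colors c T' =
      leaf_colors c T - {#g#} + {#klmul Alpha g, klmul Beta g#}"
proof (induction T arbitrary: c)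
  case Leaf
  then show ?case by (intro exI[of _ "Node Leaf Leaf"]) auto
next
  case (Node l r)
  show ?case
  proof (cases "g \<in># leaf_colors (klmul Alpha c) l")
    case True
    then obtain l' where "leaf_colors (klmul Alpha c) l' =
      leaf_colors (klmul Alpha c) l - {#g#} + {#klmul Alpha g, klmul Beta g#}" using Node.IH by blast
    then show ?thesis using True
      by (intro exI[of _ "Node l' r"]) (auto simp: multiset_eq_iff)
  next
    case False
    then have F: "g \<in># leaf_colors (klmul Beta c) r" using Node.prems by auto
    then obtain r' where "leaf_colors (klmul Beta c) r' =
      leaf_colors (klmul Beta c) r - {#g#} + {#klmul Alpha g, klmul Beta g#}" using Node.IH by blast
    then show ?thesis using F
      by (intro exI[of _ "Node l r'"]) (auto simp: multiset_eq_iff)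
  qed
qed

lemma expand_tc:
  assumes "total_color T = (a, b, c, d)" and "0 < count (leaf_colors One T) g"
  shows "\<exists>T'. total_color T' = (a + count {#klmul Alpha g, klmul Beta g#} Alpha - (if g = Alpha then 1 else 0),
                                 b + count {#klmul Alpha g, klmul Beta g#} Beta - (if g = Beta then 1 else 0),
                                 c + count {#klmul Alpha g, klmul Beta g#} Gamma - (if g = Gamma then 1 else 0),
                                 d + count {#klmul Alpha g, klmul Beta g#} One - (if g = One then 1 else 0))"
proof -
  obtain T' where T': "leaf_colors One T' = leaf_colors One T - {#g#} + {#klmul Alpha g, klmul Beta g#}"
    using expand[of g One T] assms(2) by auto
  show ?thesis using assms
    by (intro exI[of _ T']) (cases g; auto simp: total_color_def nleaves_def T')
qed

definition P :: "nat \<Rightarrow> nat \<Rightarrow> nat \<Rightarrow> nat \<Rightarrow> bool" where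
  "P a b c d \<longleftrightarrow> (2*a+2*b+c+d) mod 3 = 1 \<and> 3*a+1 \<le> 2*(a+b)+c+d \<and> 3*b+1 \<le> 2*(a+b)+c+d
     \<and> 3*c+2 \<le> (a+b)+2*(c+d) \<and> 3*d+2 \<le> (a+b)+2*(c+d)"

lemma cases5: "2*(a+b)+(c+d) = 3*k+1 \<Longrightarrow> (a+b)+2*(c+d) = 3*j+2 \<Longrightarrow>
     3*(a::nat)+1 \<le> 2*(a+b)+c+d \<Longrightarrow> 3*b+1 \<le> 2*(a+b)+c+d
     \<Longrightarrow> 3*c+2 \<le> (a+b)+2*(c+d) \<Longrightarrow> 3*d+2 \<le> (a+b)+2*(c+d) \<Longrightarrow> 
  (a = 1 \<and> b = 1 \<and> c = 0 \<and> d = 0)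
     \<or> (a \<ge> 1 \<and> b \<ge> 1 \<and> 3*(d+1)+2 \<le> (a+b)+2*(c+d))
     \<or> (a \<ge> 1 \<and> b \<ge> 1 \<and> 3*(c+1)+2 \<le> (a+b)+2*(c+d))
     \<or> (c \<ge> 1 \<and> d \<ge> 1 \<and> 3*(a+1)+1 \<le> 2*(a+b)+c+d)
     \<or> (c \<ge> 1 \<and> d \<ge> 1 \<and> 3*(b+1)+1 \<le> 2*(a+b)+c+d)"
proof -
  assume h1: "2*(a+b)+(c+d) = 3*k+1" and h2: "(a+b)+2*(c+d) = 3*j+2"
     and h3: "3*(a::nat)+1 \<le> 2*(a+b)+c+d" and h4: "3*b+1 \<le> 2*(a+b)+c+d"
     and h5: "3*c+2 \<le> (a+b)+2*(c+d)" and h6: "3*d+2 \<le> (a+b)+2*(c+d)"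
  show ?thesis
  proof (cases "a \<ge> 1 \<and> b \<ge> 1")
    case True
    show ?thesis
    proof (cases "3*(d+1)+2 \<le> (a+b)+2*(c+d) \<or> 3*(c+1)+2 \<le> (a+b)+2*(c+d)")
      case True2: True
      then show ?thesis using True by blast
    next
      case False
      then have l1: "(a+b)+2*(c+d) < 3*(d+1)+2" and l2: "(a+b)+2*(c+d) < 3*(c+1)+2" by auto
      have "3*j < 3*(d+1)" using l1 h2 by arith
      then have "j < d+1" by simp
      moreover have "3*d \<le> 3*j" using h6 h2 by arith
      then have "d \<le> j" by simp
      moreover have "3*j < 3*(c+1)" using l2 h2 by arith
      then have "j < c+1" by simp
      moreover have "3*c \<le> 3*j" using h5 h2 by arith
      then have "c \<le> j" by simp
      ultimately have cj: "c = j \<and> d = j" by auto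
      have ab: "a + b + j = 2" using h2 cj by (auto simp add: algebra_simps)
      have "a = 1" using ab True by arith
      moreover have "b = 1" using ab True by arith
      moreover have "j = 0" using ab True by arith
      ultimately show ?thesis using cj by blast
    qed
  next
    case False
    have k1: "k \<noteq> 0"
    proof
      assume "k = 0"
      then have "2*(a+b)+(c+d) = 1" using h1 by simp
      then have "a + b = 0 \<and> c + d = 1" by arith
      then show False using h5 h6 by auto
    qed
    then have k1': "k \<ge> 1" by simp
    show ?thesis
    proof (cases "a = 0")
      case True
      have "c \<ge> 1"
      proof (rule ccontr)
        assume "\<not> c \<ge> 1" then have "c = 0" by simp
        then show False using h4 h6 True by arith
      qed
      moreover have "d \<ge> 1"
      proof (rule ccontr)
        assume "\<not> d \<ge> 1" then have "d = 0" by simp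
        then show False using h4 h5 True by arith
      qed
      moreover have "3*(a+1)+1 \<le> 2*(a+b)+c+d" using True h1 k1' by arith
      ultimately show ?thesis by blast
    next
      case F2: False
      then have b0: "b = 0" using False by simp
      have "c \<ge> 1"
      proof (rule ccontr)
        assume "\<not> c \<ge> 1" then have "c = 0" by simp
        then show False using h3 h6 b0 by arith
      qed
      moreover have "d \<ge> 1"
      proof (rule ccontr)
        assume "\<not> d \<ge> 1" then have "d = 0" by simp
        then show False using h3 h5 b0 by arith
      qed
      moreover have "3*(b+1)+1 \<le> 2*(a+b)+c+d" using b0 h1 k1' by arith
      ultimately show ?thesis by blast
    qed
  qed
qed

lemma tc_counts: "total_color T = (a,b,c,d) \<Longrightarrow> count (leaf_colors One T) Alpha = a
  \<and> count (leaf_colors One T) Beta = b \<and> count (leaf_colors One T) Gamma = c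
  \<and> count (leaf_colors One T) One = d"
  by (simp add: total_color_def nleaves_def)

lemma auxj: "(y::nat) + (3*k+1) = 3*z \<Longrightarrow> \<exists>j. y = 3*j+2"
proof -
  assume h: "y + (3*k+1) = 3*z"
  then have "z \<ge> k+1" by linarith
  then obtain w where "z = k+1+w" using le_Suc_ex by blast
  then have "y = 3*w+2" using h by simp
  then show ?thesis by blast
qed
lemma construct: "a+b+c+d = N \<Longrightarrow> P a b c d \<Longrightarrow> \<exists>T. total_color T = (a,b,c,d)"
proof (induction N arbitrary: a b c d)
  case 0
  then show ?case by (simp add: P_def)
next
  case (Suc N)
  note P = Suc.prems(2)[unfolded P_def]
  define s where "s = 2*a+2*b+c+d"
  have sm: "s mod 3 = 1" using P s_def by simp
  have "s = 3*(s div 3) + 1" using div_mult_mod_eq[of s 3] sm by linarith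
  then have k0: "2*(a+b)+(c+d) = 3*(s div 3)+1" by (simp add: s_def)
  obtain k where k: "2*(a+b)+(c+d) = 3*k+1" using k0 by blast
  have "(a+b)+2*(c+d) + (3*k+1) = 3*(a+b+c+d)" unfolding k[symmetric] by simp
  then obtain j where j: "(a+b)+2*(c+d) = 3*j+2" using auxj by blast
  have cs: "(a = 1 \<and> b = 1 \<and> c = 0 \<and> d = 0)
     \<or> (a \<ge> 1 \<and> b \<ge> 1 \<and> 3*(d+1)+2 \<le> (a+b)+2*(c+d))
     \<or> (a \<ge> 1 \<and> b \<ge> 1 \<and> 3*(c+1)+2 \<le> (a+b)+2*(c+d))
     \<or> (c \<ge> 1 \<and> d \<ge> 1 \<and> 3*(a+1)+1 \<le> 2*(a+b)+c+d)
     \<or> (c \<ge> 1 \<and> d \<ge> 1 \<and> 3*(b+1)+1 \<le> 2*(a+b)+c+d)"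
    apply (rule cases5[OF k j])
    using P by auto
  have m3: "\<And>x q::nat. x = 3*q+1 \<Longrightarrow> x mod 3 = 1" by presburger
  have m3': "\<And>x q::nat. x + 3 = 3*q+1 \<Longrightarrow> x mod 3 = 1" by presburger
  from cs show ?case
  proof (elim disjE)
    assume h: "a = 1 \<and> b = 1 \<and> c = 0 \<and> d = 0"
    show ?thesis using h
      by (intro exI[of _ "Node Leaf Leaf"]) (simp add: total_color_def nleaves_def)
  next
    assume h: "a \<ge> 1 \<and> b \<ge> 1 \<and> 3*(d+1)+2 \<le> (a+b)+2*(c+d)"
    then obtain a' b' where ab: "a = Suc a'" "b = Suc b'" using h by (cases a; cases b) auto
    have e: "(2*a'+2*b'+c+(d+1)) + 3 = 3*k+1" using ab k by simp
    have "P a' b' c (d+1)" unfolding P_def using h P m3'[OF e] ab by simp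
    then obtain T' where T': "total_color T' = (a', b', c, d+1)"
      using Suc.IH[of a' b' c "d+1"] Suc.prems(1) ab by auto
    show ?thesis using expand_tc[OF T', of One] tc_counts[OF T'] ab by simp
  next
    assume h: "a \<ge> 1 \<and> b \<ge> 1 \<and> 3*(c+1)+2 \<le> (a+b)+2*(c+d)"
    then obtain a' b' where ab: "a = Suc a'" "b = Suc b'" using h by (cases a; cases b) auto
    have e: "(2*a'+2*b'+(c+1)+d) + 3 = 3*k+1" using ab k by simp
    have "P a' b' (c+1) d" unfolding P_def using h P m3'[OF e] ab by simp
    then obtain T' where T': "total_color T' = (a', b', c+1, d)"
      using Suc.IH[of a' b' "c+1" d] Suc.prems(1) ab by auto
    show ?thesis using expand_tc[OF T', of Gamma] tc_counts[OF T'] ab by simp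
  next
    assume h: "c \<ge> 1 \<and> d \<ge> 1 \<and> 3*(a+1)+1 \<le> 2*(a+b)+c+d"
    then obtain c' d' where cd: "c = Suc c'" "d = Suc d'" using h by (cases c; cases d) auto
    have e: "2*(a+1)+2*b+c'+d' = 3*k+1" using cd k by simp
    have "P (a+1) b c' d'" unfolding P_def using h P m3[OF e] cd by simp
    then obtain T' where T': "total_color T' = (a+1, b, c', d')"
      using Suc.IH[of "a+1" b c' d'] Suc.prems(1) cd by auto
    show ?thesis using expand_tc[OF T', of Alpha] tc_counts[OF T'] cd by simp
  next
    assume h: "c \<ge> 1 \<and> d \<ge> 1 \<and> 3*(b+1)+1 \<le> 2*(a+b)+c+d"
    then obtain c' d' where cd: "c = Suc c'" "d = Suc d'" using h by (cases c; cases d) auto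
    have e: "2*a+2*(b+1)+c'+d' = 3*k+1" using cd k by simp
    have "P a (b+1) c' d'" unfolding P_def using h P m3[OF e] cd by simp
    then obtain T' where T': "total_color T' = (a, b+1, c', d')"
      using Suc.IH[of a "b+1" c' d'] Suc.prems(1) cd by auto
    show ?thesis using expand_tc[OF T', of Beta] tc_counts[OF T'] cd by simp
  qed
qed

lemma conv1: "(real x \<le> (2 * real m + real n - 1) / 3) = (3*x+1 \<le> 2*m+n)"
proof -
  have "(real x \<le> (2 * real m + real n - 1) / 3) = (real (3*x+1) \<le> real (2*m+n))"
    by (simp add: field_simps)
  then show ?thesis by (simp only: of_nat_le_iff)
qed

lemma conv2: "(real x \<le> (real m + 2 * real n - 2) / 3) = (3*x+2 \<le> m+2*n)"
proof -
  have "(real x \<le> (real m + 2 * real n - 2) / 3) = (real (3*x+2) \<le> real (m+2*n))"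
    by (simp add: field_simps)
  then show ?thesis by (simp only: of_nat_le_iff)
qed

lemma part4: "(a, b, c, d) \<noteq> (0, 0, 0, 1) \<Longrightarrow>
        (representable (a, b, c, d) \<longleftrightarrow>
          (2 * a + 2 * b + c + d) mod 3 = 1
          \<and> real a \<le> phi1_4 (a, b, c, d)
          \<and> real b \<le> phi1_4 (a, b, c, d)
          \<and> real c \<le> phi2_4 (a, b, c, d)
          \<and> real d \<le> phi2_4 (a, b, c, d))"
proof -
  assume ne: "(a, b, c, d) \<noteq> (0, 0, 0, 1)"
  have eqs: "phi1_4 (a, b, c, d) = (2 * real (a+b) + real (c+d) - 1) / 3"
            "phi2_4 (a, b, c, d) = (real (a+b) + 2 * real (c+d) - 2) / 3"
    by (simp_all add: phi1_4_def phi2_4_def phi1_def phi2_def)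
  have rhs: "((2 * a + 2 * b + c + d) mod 3 = 1
          \<and> real a \<le> phi1_4 (a, b, c, d)
          \<and> real b \<le> phi1_4 (a, b, c, d)
          \<and> real c \<le> phi2_4 (a, b, c, d)
          \<and> real d \<le> phi2_4 (a, b, c, d)) = P a b c d"
    unfolding eqs conv1 conv2 P_def by (simp add: algebra_simps)
  show ?thesis unfolding rhs
  proof
    assume "representable (a, b, c, d)"
    then obtain T where T: "total_color T = (a, b, c, d)" unfolding representable_def by blast
    have "T \<noteq> Leaf" using T ne by (auto simp: total_color_def nleaves_def)
    have nl: "nleaves Alpha T = a" "nleaves Beta T = b" "nleaves Gamma T = c" "nleaves One T = d"
      using T by (simp_all add: total_color_def)
    from part3[OF \<open>T \<noteq> Leaf\<close>] part1[OF T] have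
       "(2 * (a + b) + (c + d)) mod 3 = 1 \<and> real a \<le> phi1_4 (a, b, c, d)
          \<and> real b \<le> phi1_4 (a, b, c, d)
          \<and> real c \<le> phi2_4 (a, b, c, d)
          \<and> real d \<le> phi2_4 (a, b, c, d)"
      unfolding phi1T_def phi2T_def T nl by simp
    then have "(2 * a + 2 * b + c + d) mod 3 = 1
          \<and> real a \<le> phi1_4 (a, b, c, d)
          \<and> real b \<le> phi1_4 (a, b, c, d)
          \<and> real c \<le> phi2_4 (a, b, c, d)
          \<and> real d \<le> phi2_4 (a, b, c, d)" by (simp add: algebra_simps)
    then show "P a b c d" using rhs by simp
  next
    assume "P a b c d"
    then show "representable (a, b, c, d)"
      using construct[of a b c d "a+b+c+d"] unfolding representable_def by blast
  qed
qed

theorem theorem4p1: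
  shows
  "(\<forall>T a b c d. total_color T = (a, b, c, d) \<longrightarrow>
       (2 * (a + b) + (c + d)) mod 3 = 1)
   \<and> (\<forall>T. real (nvertices Alpha T) = phi1T T
          \<and> real (nvertices Beta T) = phi1T T
          \<and> real (nvertices Gamma T) = phi2T T
          \<and> real (nvertices One T) = phi2T T + 1)
   \<and> (\<forall>T. T \<noteq> Leaf \<longrightarrow>
          real (nleaves Alpha T) \<le> phi1T T
          \<and> real (nleaves Beta T) \<le> phi1T T
          \<and> real (nleaves Gamma T) \<le> phi2T T
          \<and> real (nleaves One T) \<le> phi2T T)
   \<and> (\<forall>a b c d :: nat. (a, b, c, d) \<noteq> (0, 0, 0, 1) \<longrightarrow>
        (representable (a, b, c, d) \<longleftrightarrow>
          (2 * a + 2 * b + c + d) mod 3 = 1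
          \<and> real a \<le> phi1_4 (a, b, c, d)
          \<and> real b \<le> phi1_4 (a, b, c, d)
          \<and> real c \<le> phi2_4 (a, b, c, d)
          \<and> real d \<le> phi2_4 (a, b, c, d)))"
  apply (intro conjI)
  subgoal by (intro allI impI) (rule part1)
  subgoal by (intro allI) (rule part2)
  subgoal by (intro allI impI) (rule part3)
  subgoal by (intro allI impI) (rule part4)
  done

end
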